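(* Let $\Sigma\subseteq\mathcal L_{\Diamond\forall}$ be closed under subformulas and let $\mathfrak Q=(W,\preccurlyeq,S,\ell)$ be an honest, deterministic $\Sigma$-quasimodel. Define a valuation $[\![\cdot]\!]_{\mathfrak Q}$ on the dynamical system $(W,\text{up-set topology of }\preccurlyeq,S)$ by $[\![p]\!]_{\mathfrak Q}=\{w\in W: p\in\ell^+(w)\}$, extended to all formulas by the usual recursive clauses. Then for all formulas $\varphi\in\mathcal L_\Diamond$ and all $w\in W$: (1) if $\varphi\in\ell^+(w)$ then $w\in[\![\varphi]\!]_{\mathfrak Q}$, and (2) if $\varphi\in\ell^-(w)$ then $w\notin[\![\varphi]\!]_{\mathfrak Q}$.
   Context: $\mathcal L_{\Diamond\forall}$: formulas $\varphi::=\bot\mid p\mid\varphi\wedge\varphi\mid\varphi\vee\varphi\mid\varphi\to\varphi\mid\circ\varphi\mid\Diamond\varphi\mid\forall\varphi$; $\mathcal L_\Diamond$ is its $\forall$-free fragment. Recursive clauses of a valuation on a dynamical system $(X,\mathcal T,f)$: $[\![\bot]\!]=\varnothing$, $[\![\varphi\wedge\psi]\!]=[\![\varphi]\!]\cap[\![\psi]\!]$, $[\![\varphi\vee\psi]\!]=[\![\varphi]\!]\cup[\![\psi]\!]$, $[\![\varphi\to\psi]\!]=((X\setminus[\![\varphi]\!])\cup[\![\psi]\!])^\circ$, $[\![\circ\varphi]\!]=f^{-1}[\![\varphi]\!]$, $[\![\Diamond\varphi]\!]=\bigcup_nf^{-n}[\![\varphi]\!]$, $[\![\forall\varphi]\!]=X$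 if $[\![\varphi]\!]=X$ else $\varnothing$. The up-set topology of a partial order has the upward closed sets as open sets. A $\Sigma$-type is a pair $\Phi=(\Phi^+,\Phi^-)$ of finite subsets of $\Sigma$ with: (1) $\Phi^-\cap\Phi^+=\varnothing$; (2) $\bot\notin\Phi^+$; (3) $\varphi\wedge\psi\in\Phi^+\Rightarrow\varphi,\psi\in\Phi^+$; (4) $\varphi\wedge\psi\in\Phi^-\Rightarrow\varphi\in\Phi^-$ or $\psi\in\Phi^-$; (5) $\varphi\vee\psi\in\Phi^+\Rightarrow\varphi\in\Phi^+$ or $\psi\in\Phi^+$; (6) $\varphi\vee\psi\in\Phi^-\Rightarrow\varphi,\psi\in\Phi^-$; (7) $\varphi\to\psi\in\Phi^+\Rightarrow\varphi\in\Phi^-$ or $\psi\in\Phi^+$; (8) $\varphi\to\psi\in\Phi^-\Rightarrow\psi\in\Phi^-$; (9) $\Diamond\varphi\in\Phi^-\Rightarrow\varphi\in\Phi^-$. $\Phi\preccurlyeq_T\Psi$ means $\Phi^+\subseteq\Psi^+$ and $\Psi^-\subseteq\Phi^-$. A pair $(\Phi,\Psi)$ of types is sensible if: $\circ\varphi\in\Phi^+\Rightarrow\varphi\in\Psi^+$; $\circ\varphi\in\Phi^-\Rightarrow\varphi\in\Psi^-$; $\Diamond\varphi\in\Phi^+\Rightarrow\varphi\in\Phi^+$ or $\Diamond\varphi\in\Psi^+$; $\Diamond\varphi\in\Phi^-\Rightarrow\Diamond\varphi\in\Psi^-$; $\forall\varphi\in\Phi^+\Leftrightarrow\forall\varphi\in\Psi^+$;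 $\forall\varphi\in\Phi^-\Leftrightarrow\forall\varphi\in\Psi^-$. A $\Sigma$-quasimodel is $(W,\preccurlyeq,S,\ell)$ where $\preccurlyeq$ is a partial order on $W$; $\ell$ assigns to each $w$ a $\Sigma$-type $\ell(w)=(\ell^+(w),\ell^-(w))$ with $w\preccurlyeq v\Rightarrow\ell(w)\preccurlyeq_T\ell(v)$; whenever $\varphi\to\psi\in\ell^-(w)$ there is $v\succcurlyeq w$ with $\varphi\in\ell^+(v)$, $\psi\in\ell^-(v)$; $S\subseteq W\times W$ is forward confluent (if $w\preccurlyeq w'$ and $w\mathrel Sv$ then there is $v'\succcurlyeq v$ with $w'\mathrel Sv'$); every pair $(\ell(w),\ell(v))$ with $w\mathrel Sv$ is sensible; $S$ is serial; and $S$ is $\omega$-sensible: whenever $\Diamond\varphi\in\ell^+(w)$ there are $n\ge0$ and $v$ with $w\mathrel{S^n}v$ and $\varphi\in\ell^+(v)$. It is honest if for all $w$ and $\forall\varphi\in\Sigma$: $\forall\varphi\in\ell^+(w)$ implies $\varphi\in\ell^+(v)$ for all $v\in W$, and $\forall\varphi\in\ell^-(w)$ implies $\varphi\in\ell^-(v)$ for some $v\in W$. It is deterministic if $S$ is a function. *)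

theory Defs
  imports "HOL-Analysis.Analysis"
begin

datatype 'a fml =
    Bot
  | Var 'a
  | And "'a fml" "'a fml"
  | Or "'a fml" "'a fml"
  | Imp "'a fml" "'a fml"
  | Next "'a fml"
  | Dia "'a fml"
  | All "'a fml"

fun forall_free :: "'a fml \<Rightarrow> bool" where
  "forall_free Bot = True"
| "forall_free (Var p) = True"
| "forall_free (And a b) = (forall_free a \<and> forall_free b)"
| "forall_free (Or a b) = (forall_free a \<and> forall_free b)"
| "forall_free (Imp a b) = (forall_free a \<and> forall_free b)"
| "forall_free (Next a) = forall_free a"
| "forall_free (Dia a) = forall_free a"
| "forall_free (All a) = False"

fun subformulas :: "'a fml \<Rightarrow> 'a fml set" where
  "subformulas Bot = {Bot}"
| "subformulas (Var p) = {Var p}"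
| "subformulas (And a b) = insert (And a b) (subformulas a \<union> subformulas b)"
| "subformulas (Or a b) = insert (Or a b) (subformulas a \<union> subformulas b)"
| "subformulas (Imp a b) = insert (Imp a b) (subformulas a \<union> subformulas b)"
| "subformulas (Next a) = insert (Next a) (subformulas a)"
| "subformulas (Dia a) = insert (Dia a) (subformulas a)"
| "subformulas (All a) = insert (All a) (subformulas a)"

definition subformula_closed :: "'a fml set \<Rightarrow> bool" where
  "subformula_closed \<Sigma> \<longleftrightarrow> (\<forall>\<phi>\<in>\<Sigma>. subformulas \<phi> \<subseteq> \<Sigma>)"

fun val :: "'w topology \<Rightarrow> ('w \<Rightarrow> 'w) \<Rightarrow> ('a \<Rightarrow> 'w set) \<Rightarrow> 'a fml \<Rightarrow> 'w set" where
  "val T f V Bot = {}"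
| "val T f V (Var p) = V p"
| "val T f V (And a b) = val T f V a \<inter> val T f V b"
| "val T f V (Or a b) = val T f V a \<union> val T f V b"
| "val T f V (Imp a b) = T interior_of ((topspace T - val T f V a) \<union> val T f V b)"
| "val T f V (Next a) = topspace T \<inter> f -` val T f V a"
| "val T f V (Dia a) = (\<Union>n. topspace T \<inter> (f ^^ n) -` val T f V a)"
| "val T f V (All a) = (if val T f V a = topspace T then topspace T else {})"

definition upset_topology :: "'w set \<Rightarrow> ('w \<Rightarrow> 'w \<Rightarrow> bool) \<Rightarrow> 'w topology" where
  "upset_topology W leq =
     topology (\<lambda>U. U \<subseteq> W \<and> (\<forall>w\<in>U. \<forall>v\<in>W. leq w v \<longrightarrow> v \<in> U))"

definition is_type :: "'a fml set \<Rightarrow> 'a fml set \<times> 'a fml set \<Rightarrow> bool" where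
  "is_type \<Sigma> \<Phi> \<longleftrightarrow>
     (let P = fst \<Phi>; N = snd \<Phi> in
       finite P \<and> finite N \<and> P \<subseteq> \<Sigma> \<and> N \<subseteq> \<Sigma> \<and>
       N \<inter> P = {} \<and>
       Bot \<notin> P \<and>
       (\<forall>a b. And a b \<in> P \<longrightarrow> a \<in> P \<and> b \<in> P) \<and>
       (\<forall>a b. And a b \<in> N \<longrightarrow> a \<in> N \<or> b \<in> N) \<and>
       (\<forall>a b. Or a b \<in> P \<longrightarrow> a \<in> P \<or> b \<in> P) \<and>
       (\<forall>a b. Or a b \<in> N \<longrightarrow> a \<in> N \<and> b \<in> N) \<and>
       (\<forall>a b. Imp a b \<in> P \<longrightarrow> a \<in> N \<or> b \<in> P) \<and>
       (\<forall>a b. Imp a b \<in> N \<longrightarrow> b \<in> N) \<and>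
       (\<forall>a. Dia a \<in> N \<longrightarrow> a \<in> N))"

definition type_le :: "'a fml set \<times> 'a fml set \<Rightarrow> 'a fml set \<times> 'a fml set \<Rightarrow> bool" where
  "type_le \<Phi> \<Psi> \<longleftrightarrow> fst \<Phi> \<subseteq> fst \<Psi> \<and> snd \<Psi> \<subseteq> snd \<Phi>"

definition sensible :: "'a fml set \<times> 'a fml set \<Rightarrow> 'a fml set \<times> 'a fml set \<Rightarrow> bool" where
  "sensible \<Phi> \<Psi> \<longleftrightarrow>
     (\<forall>a. Next a \<in> fst \<Phi> \<longrightarrow> a \<in> fst \<Psi>) \<and>
     (\<forall>a. Next a \<in> snd \<Phi> \<longrightarrow> a \<in> snd \<Psi>) \<and>
     (\<forall>a. Dia a \<in> fst \<Phi> \<longrightarrow> a \<in> fst \<Phi> \<or> Dia a \<in> fst \<Psi>) \<and>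
     (\<forall>a. Dia a \<in> snd \<Phi> \<longrightarrow> Dia a \<in> snd \<Psi>) \<and>
     (\<forall>a. All a \<in> fst \<Phi> \<longleftrightarrow> All a \<in> fst \<Psi>) \<and>
     (\<forall>a. All a \<in> snd \<Phi> \<longleftrightarrow> All a \<in> snd \<Psi>)"

definition quasimodel ::
  "'a fml set \<Rightarrow> 'w set \<Rightarrow> ('w \<Rightarrow> 'w \<Rightarrow> bool) \<Rightarrow> ('w \<Rightarrow> 'w \<Rightarrow> bool)
     \<Rightarrow> ('w \<Rightarrow> 'a fml set \<times> 'a fml set) \<Rightarrow> bool" where
  "quasimodel \<Sigma> W leq S l \<longleftrightarrow>
     \<comment> \<open>leq is a partial order on W\<close>
     (\<forall>w\<in>W. leq w w) \<and>
     (\<forall>u\<in>W. \<forall>v\<in>W. \<forall>w\<in>W. leq u v \<longrightarrow> leq v w \<longrightarrow> leq u w) \<and>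
     (\<forall>u\<in>W. \<forall>v\<in>W. leq u v \<longrightarrow> leq v u \<longrightarrow> u = v) \<and>
     \<comment> \<open>S is a relation on W\<close>
     (\<forall>w v. S w v \<longrightarrow> w \<in> W \<and> v \<in> W) \<and>
     \<comment> \<open>labels are types, monotone along leq\<close>
     (\<forall>w\<in>W. is_type \<Sigma> (l w)) \<and>
     (\<forall>w\<in>W. \<forall>v\<in>W. leq w v \<longrightarrow> type_le (l w) (l v)) \<and>
     \<comment> \<open>implication witnesses\<close>
     (\<forall>w\<in>W. \<forall>a b. Imp a b \<in> snd (l w) \<longrightarrow>
        (\<exists>v\<in>W. leq w v \<and> a \<in> fst (l v) \<and> b \<in> snd (l v))) \<and>
     \<comment> \<open>forward confluence\<close>
     (\<forall>w\<in>W. \<forall>w'\<in>W. \<forall>v. leq w w' \<longrightarrow> S w v \<longrightarrow> (\<exists>v'\<in>W. leq v v' \<and> S w' v')) \<and>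
     \<comment> \<open>sensibility\<close>
     (\<forall>w v. S w v \<longrightarrow> sensible (l w) (l v)) \<and>
     \<comment> \<open>seriality\<close>
     (\<forall>w\<in>W. \<exists>v. S w v) \<and>
     \<comment> \<open>omega-sensibility\<close>
     (\<forall>w\<in>W. \<forall>a. Dia a \<in> fst (l w) \<longrightarrow> (\<exists>n v. (S ^^ n) w v \<and> v \<in> W \<and> a \<in> fst (l v)))"

definition honest :: "'a fml set \<Rightarrow> 'w set \<Rightarrow> ('w \<Rightarrow> 'a fml set \<times> 'a fml set) \<Rightarrow> bool" where
  "honest \<Sigma> W l \<longleftrightarrow>
     (\<forall>w\<in>W. \<forall>a. All a \<in> \<Sigma> \<longrightarrow>
        (All a \<in> fst (l w) \<longrightarrow> (\<forall>v\<in>W. a \<in> fst (l v))) \<and>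
        (All a \<in> snd (l w) \<longrightarrow> (\<exists>v\<in>W. a \<in> snd (l v))))"

definition deterministic :: "'w set \<Rightarrow> ('w \<Rightarrow> 'w \<Rightarrow> bool) \<Rightarrow> bool" where
  "deterministic W S \<longleftrightarrow> (\<forall>w\<in>W. \<exists>!v. S w v)"

definition succ_fun :: "('w \<Rightarrow> 'w \<Rightarrow> bool) \<Rightarrow> 'w \<Rightarrow> 'w" where
  "succ_fun S w = (THE v. S w v)"

definition qm_val ::
  "'w set \<Rightarrow> ('w \<Rightarrow> 'w \<Rightarrow> bool) \<Rightarrow> ('w \<Rightarrow> 'w \<Rightarrow> bool)
     \<Rightarrow> ('w \<Rightarrow> 'a fml set \<times> 'a fml set) \<Rightarrow> 'a fml \<Rightarrow> 'w set" where
  "qm_val W leq S l =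
     val (upset_topology W leq) (succ_fun S) (\<lambda>p. {w\<in>W. Var p \<in> fst (l w)})"

end

theory Submission
  imports Defs
begin

lemma upset_istop: "istopology (\<lambda>U. U \<subseteq> W \<and> (\<forall>w\<in>U. \<forall>v\<in>W. leq w v \<longrightarrow> v \<in> U))"
  unfolding istopology_def by blast

lemma upset_open: "openin (upset_topology W leq) U \<longleftrightarrow> U \<subseteq> W \<and> (\<forall>w\<in>U. \<forall>v\<in>W. leq w v \<longrightarrow> v \<in> U)"
  unfolding upset_topology_def topology_inverse'[OF upset_istop] by simp

lemma upset_topspace: "topspace (upset_topology W leq) = W"
  unfolding topspace_def upset_open by blast

lemma upset_interior:
  assumes refl: "\<forall>w\<in>W. leq w w"
    and trans: "\<forall>u\<in>W. \<forall>v\<in>W. \<forall>w\<in>W. leq u v \<longrightarrow> leq v w \<longrightarrow> leq u w"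
  shows "w \<in> upset_topology W leq interior_of A \<longleftrightarrow> w \<in> W \<and> (\<forall>v\<in>W. leq w v \<longrightarrow> v \<in> A)"
proof
  assume "w \<in> upset_topology W leq interior_of A"
  then obtain U where "openin (upset_topology W leq) U" "w \<in> U" "U \<subseteq> A"
    unfolding interior_of_def by blast
  then show "w \<in> W \<and> (\<forall>v\<in>W. leq w v \<longrightarrow> v \<in> A)" unfolding upset_open by blast
next
  assume h: "w \<in> W \<and> (\<forall>v\<in>W. leq w v \<longrightarrow> v \<in> A)"
  let ?U = "{v\<in>W. leq w v}"
  have "openin (upset_topology W leq) ?U" unfolding upset_open using trans h by blast
  moreover have "w \<in> ?U" using h refl by blast
  moreover have "?U \<subseteq> A" using h by blast
  ultimately show "w \<in> upset_topology W leq interior_of A"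
    unfolding interior_of_def by blast
qed

lemma tyD:
  assumes "is_type \<Sigma> \<Phi>"
  shows "snd \<Phi> \<inter> fst \<Phi> = {}" "Bot \<notin> fst \<Phi>"
    "And a b \<in> fst \<Phi> \<Longrightarrow> a \<in> fst \<Phi> \<and> b \<in> fst \<Phi>"
    "And a b \<in> snd \<Phi> \<Longrightarrow> a \<in> snd \<Phi> \<or> b \<in> snd \<Phi>"
    "Or a b \<in> fst \<Phi> \<Longrightarrow> a \<in> fst \<Phi> \<or> b \<in> fst \<Phi>"
    "Or a b \<in> snd \<Phi> \<Longrightarrow> a \<in> snd \<Phi> \<and> b \<in> snd \<Phi>"
    "Imp a b \<in> fst \<Phi> \<Longrightarrow> a \<in> snd \<Phi> \<or> b \<in> fst \<Phi>"
    "Dia a \<in> snd \<Phi> \<Longrightarrow> a \<in> snd \<Phi>"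
  using assms unfolding is_type_def Let_def by blast+

lemma sensD:
  assumes "sensible \<Phi> \<Psi>"
  shows "Next a \<in> fst \<Phi> \<Longrightarrow> a \<in> fst \<Psi>" "Next a \<in> snd \<Phi> \<Longrightarrow> a \<in> snd \<Psi>"
    "Dia a \<in> snd \<Phi> \<Longrightarrow> Dia a \<in> snd \<Psi>"
  using assms unfolding sensible_def by blast+

theorem lemma4p7:
  fixes \<Sigma> :: "'a fml set" and W :: "'w set"
    and leq S :: "'w \<Rightarrow> 'w \<Rightarrow> bool" and l :: "'w \<Rightarrow> 'a fml set \<times> 'a fml set"
  assumes "subformula_closed \<Sigma>"
    and "quasimodel \<Sigma> W leq S l"
    and "honest \<Sigma> W l"
    and "deterministic W S"
  shows "\<forall>\<phi> w. forall_free \<phi> \<and> w \<in> W \<longrightarrow>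
           (\<phi> \<in> fst (l w) \<longrightarrow> w \<in> qm_val W leq S l \<phi>) \<and>
           (\<phi> \<in> snd (l w) \<longrightarrow> w \<notin> qm_val W leq S l \<phi>)"
proof -
  note Q = assms(2)[unfolded quasimodel_def]
  define f where "f = succ_fun S"
  have refl: "\<forall>w\<in>W. leq w w" using Q[THEN conjunct1] by blast
  have trans: "\<forall>u\<in>W. \<forall>v\<in>W. \<forall>w\<in>W. leq u v \<longrightarrow> leq v w \<longrightarrow> leq u w"
    using Q[THEN conjunct2, THEN conjunct1] by blast
  have SW: "\<And>w v. S w v \<Longrightarrow> w \<in> W \<and> v \<in> W" using Q[THEN conjunct2, THEN conjunct2, THEN conjunct2, THEN conjunct1] by blast
  have ty: "\<And>w. w \<in> W \<Longrightarrow> is_type \<Sigma> (l w)" using Q[THEN conjunct2, THEN conjunct2, THEN conjunct2, THEN conjunct2, THEN conjunct1] by blast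
  have mono: "\<And>w v. w \<in> W \<Longrightarrow> v \<in> W \<Longrightarrow> leq w v \<Longrightarrow> type_le (l w) (l v)" using Q[THEN conjunct2, THEN conjunct2, THEN conjunct2, THEN conjunct2, THEN conjunct2, THEN conjunct1] by blast
  have impw: "\<And>w a b. w \<in> W \<Longrightarrow> Imp a b \<in> snd (l w) \<Longrightarrow>
        (\<exists>v\<in>W. leq w v \<and> a \<in> fst (l v) \<and> b \<in> snd (l v))" using Q[THEN conjunct2, THEN conjunct2, THEN conjunct2, THEN conjunct2, THEN conjunct2, THEN conjunct2, THEN conjunct1] by blast
  have sens: "\<And>w v. S w v \<Longrightarrow> sensible (l w) (l v)" using Q[THEN conjunct2, THEN conjunct2, THEN conjunct2, THEN conjunct2, THEN conjunct2, THEN conjunct2, THEN conjunct2, THEN conjunct2, THEN conjunct1] by blast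
  have omega: "\<And>w a. w \<in> W \<Longrightarrow> Dia a \<in> fst (l w) \<Longrightarrow> (\<exists>n v. (S ^^ n) w v \<and> v \<in> W \<and> a \<in> fst (l v))"
    using Q[THEN conjunct2, THEN conjunct2, THEN conjunct2, THEN conjunct2, THEN conjunct2, THEN conjunct2, THEN conjunct2, THEN conjunct2, THEN conjunct2, THEN conjunct2] by blast
  have Sf: "\<And>w. w \<in> W \<Longrightarrow> S w (f w)"
  proof -
    fix w assume "w \<in> W"
    then have "\<exists>!v. S w v" using assms(4) unfolding deterministic_def by blast
    then show "S w (f w)" unfolding f_def succ_fun_def by (rule theI')
  qed
  have Suniq: "\<And>w v. w \<in> W \<Longrightarrow> S w v \<Longrightarrow> v = f w"
    using Sf assms(4) unfolding deterministic_def by blast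
  have fW: "\<And>w. w \<in> W \<Longrightarrow> f w \<in> W" using Sf SW by blast
  have fnW: "\<And>n w. w \<in> W \<Longrightarrow> (f ^^ n) w \<in> W"
  proof -
    fix n w assume "w \<in> W" then show "(f ^^ n) w \<in> W" by (induction n) (auto intro: fW)
  qed
  have Sn: "\<And>n w v. w \<in> W \<Longrightarrow> (S ^^ n) w v \<Longrightarrow> v = (f ^^ n) w"
  proof -
    fix n w v assume "w \<in> W" "(S ^^ n) w v"
    then show "v = (f ^^ n) w"
    proof (induction n arbitrary: v)
      case 0 then show ?case by simp
    next
      case (Suc n)
      then obtain u where "(S ^^ n) w u" "S u v" by auto
      then show ?case using Suc SW Suniq by auto
    qed
  qed
  let ?T = "upset_topology W leq"
  let ?V = "\<lambda>p. {w\<in>W. Var p \<in> fst (l w)}"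
  have main: "\<And>w. forall_free \<phi> \<Longrightarrow> w \<in> W \<Longrightarrow>
           (\<phi> \<in> fst (l w) \<longrightarrow> w \<in> val ?T f ?V \<phi>) \<and>
           (\<phi> \<in> snd (l w) \<longrightarrow> w \<notin> val ?T f ?V \<phi>)" for \<phi>
  proof (induction \<phi>)
    case Bot
    then show ?case using tyD(2)[OF ty[OF Bot.prems(2)]] by simp
  next
    case (Var p)
    then show ?case using tyD(1)[OF ty[OF Var.prems(2)]] Var.prems(2) by auto
  next
    case (And a b)
    have ff: "forall_free a" "forall_free b" using And.prems by auto
    show ?case
      using tyD(3,4)[OF ty[OF And.prems(2)], of a b] And.IH(1)[OF ff(1) And.prems(2)] And.IH(2)[OF ff(2) And.prems(2)]
      unfolding val.simps Int_iff by blast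
  next
    case (Or a b)
    have ff: "forall_free a" "forall_free b" using Or.prems by auto
    show ?case
      using tyD(5,6)[OF ty[OF Or.prems(2)], of a b] Or.IH(1)[OF ff(1) Or.prems(2)] Or.IH(2)[OF ff(2) Or.prems(2)]
      unfolding val.simps Un_iff by blast
  next
    case (Imp a b)
    have ffa: "forall_free a" "forall_free b" using Imp.prems by auto
    show ?case
    proof (intro conjI impI)
      assume h: "Imp a b \<in> fst (l w)"
      have "\<forall>v\<in>W. leq w v \<longrightarrow> v \<in> (W - val ?T f ?V a) \<union> val ?T f ?V b"
      proof (intro ballI impI)
        fix v assume v: "v \<in> W" "leq w v"
        have "Imp a b \<in> fst (l v)" using mono[OF Imp.prems(2) v(1) v(2)] h unfolding type_le_def by blast
        then have "a \<in> snd (l v) \<or> b \<in> fst (l v)" using tyD(7)[OF ty[OF v(1)]] by blast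
        then show "v \<in> (W - val ?T f ?V a) \<union> val ?T f ?V b" using Imp.IH ffa v by blast
      qed
      then show "w \<in> val ?T f ?V (Imp a b)"
        using Imp.prems(2) by (simp add: upset_interior[OF refl trans] upset_topspace)
    next
      assume h: "Imp a b \<in> snd (l w)"
      obtain v where v: "v \<in> W" "leq w v" "a \<in> fst (l v)" "b \<in> snd (l v)" using impw[OF Imp.prems(2) h] by blast
      have "v \<in> val ?T f ?V a" "v \<notin> val ?T f ?V b" using Imp.IH ffa v by blast+
      then show "w \<notin> val ?T f ?V (Imp a b)"
        using v by (simp add: upset_interior[OF refl trans] upset_topspace) blast
    qed
  next
    case (Next a)
    have ff: "forall_free a" using Next.prems by auto
    have s: "sensible (l w) (l (f w))" using sens Sf Next.prems(2) by blast
    have fw: "f w \<in> W" using fW[OF Next.prems(2)] .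
    show ?case
      using Next.IH[OF ff fw] sensD(1,2)[OF s, of a] Next.prems(2) fw
      by (simp add: upset_topspace)
  next
    case (Dia a)
    have ff: "forall_free a" using Dia.prems by auto
    show ?case
    proof (intro conjI impI)
      assume h: "Dia a \<in> fst (l w)"
      obtain n v where nv: "(S ^^ n) w v" "v \<in> W" "a \<in> fst (l v)" using omega[OF Dia.prems(2) h] by blast
      have "v = (f ^^ n) w" using Sn[OF Dia.prems(2) nv(1)] .
      then show "w \<in> val ?T f ?V (Dia a)"
        using Dia.IH[OF ff nv(2)] nv Dia.prems(2) by (auto simp: upset_topspace)
    next
      assume h: "Dia a \<in> snd (l w)"
      have k: "Dia a \<in> snd (l ((f ^^ n) w))" for n
      proof (induction n)
        case 0 then show ?case using h by simp
      next
        case (Suc n)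
        have "S ((f ^^ n) w) ((f ^^ Suc n) w)" using Sf fnW Dia.prems(2) by simp
        then show ?case using sensD(3)[OF sens] Suc by blast
      qed
      have "a \<in> snd (l ((f ^^ n) w))" for n
        using k[of n] tyD(8)[OF ty[OF fnW[OF Dia.prems(2)]]] by blast
      then show "w \<notin> val ?T f ?V (Dia a)"
        using Dia.IH[OF ff fnW[OF Dia.prems(2)]] by simp
    qed
  next
    case (All a)
    then show ?case by simp
  qed
  show ?thesis unfolding qm_val_def f_def[symmetric] using main by blast
qed

end
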